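(* Let $m\ge1$ and let $P=(p_{ij})$ be an $m\times m$ real symmetric matrix such that (A1) $p_{ij}=p_{ji}\le0$ for $i\ne j$, and (A2) $0<r_1\le\bar p_i:=\sum_{j=1}^mp_{ij}\le r_2$ for every $i$, where $r_1,r_2$ are positive constants. For $\beta\in\mathbb{R}^m$, let $\alpha\in\mathbb{R}^m$ be the solution of $P\alpha=\beta$. Then for all $i\ne j$, $$|\alpha_i-\alpha_j|\le m(m-1)\frac{r_2}{r_1}\frac{|\beta|}{|p_{ij}|+r_1},$$ where $|\beta|=\max_i|\beta_i|$. *)

theory Defs
  imports "HOL-Analysis.Analysis"
begin

definition maxnorm :: "real ^ 'n \<Rightarrow> real" where
  "maxnorm v = Max (range (\<lambda>i. \<bar>v $ i\<bar>))"

end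

theory Submission
  imports Defs
begin

lemma maxnorm_ge: "\<bar>v $ k\<bar> \<le> maxnorm (v :: real ^ 'n)"
  unfolding maxnorm_def by (rule Max_ge) auto

lemma maxnorm_nonneg: "0 \<le> maxnorm (v :: real ^ 'n)"
  using maxnorm_ge[of v] abs_ge_zero order_trans by blast

lemma maxnorm_uminus: "maxnorm (- v) = maxnorm (v :: real ^ 'n)"
  unfolding maxnorm_def by simp

lemma keyA:
  fixes P :: "real ^ 'n ^ 'n" and \<alpha> \<beta> :: "real ^ 'n" and r1 :: real
  assumes symm: "\<And>k l. P $ k $ l = P $ l $ k"
    and offdiag: "\<And>k l. k \<noteq> l \<Longrightarrow> P $ k $ l \<le> 0"
    and r1pos: "0 < r1"
    and rowsum_lo: "\<And>k. r1 \<le> (\<Sum>l\<in>UNIV. P $ k $ l)"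
    and sol: "\<And>k. \<beta> $ k = (\<Sum>l\<in>UNIV. P $ k $ l * \<alpha> $ l)"
    and lt: "\<alpha> $ j < \<alpha> $ i" and nn: "0 \<le> \<alpha> $ i"
  shows "\<bar>P $ i $ j\<bar> * (\<alpha> $ i - \<alpha> $ j) + r1 * \<alpha> $ i \<le> real (CARD('n) - 1) * maxnorm \<beta>"
proof -
  define S where "S = {k. \<alpha> $ i \<le> \<alpha> $ k}"
  define pb where "pb k = (\<Sum>l\<in>UNIV. P $ k $ l)" for k
  have iS: "i \<in> S" and jS: "j \<notin> S" using lt by (auto simp: S_def)
  have fS: "finite S" by simp
  have decomp: "\<beta> $ k = pb k * \<alpha> $ k + (\<Sum>l\<in>UNIV. P $ k $ l * (\<alpha> $ l - \<alpha> $ k))" for k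
    by (simp add: sol pb_def sum_distrib_right right_diff_distrib sum_subtractf)
  have inner: "(\<Sum>k\<in>S. \<Sum>l\<in>S. P $ k $ l * (\<alpha> $ l - \<alpha> $ k)) = 0"
  proof -
    have "(\<Sum>k\<in>S. \<Sum>l\<in>S. P $ k $ l * (\<alpha> $ l - \<alpha> $ k)) = (\<Sum>l\<in>S. \<Sum>k\<in>S. P $ k $ l * (\<alpha> $ l - \<alpha> $ k))"
      by (rule sum.swap)
    also have "\<dots> = (\<Sum>k\<in>S. \<Sum>l\<in>S. - (P $ k $ l * (\<alpha> $ l - \<alpha> $ k)))"
      by (intro sum.cong refl) (simp add: symm[of _ "_ :: 'n"] algebra_simps)
    also have "\<dots> = - (\<Sum>k\<in>S. \<Sum>l\<in>S. P $ k $ l * (\<alpha> $ l - \<alpha> $ k))"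
      by (simp add: sum_negf)
    finally show ?thesis by simp
  qed
  have U: "UNIV = S \<union> (- S)" by auto
  have splitk: "(\<Sum>l\<in>UNIV. P $ k $ l * (\<alpha> $ l - \<alpha> $ k)) =
      (\<Sum>l\<in>S. P $ k $ l * (\<alpha> $ l - \<alpha> $ k)) + (\<Sum>l\<in>-S. P $ k $ l * (\<alpha> $ l - \<alpha> $ k))" for k
    by (subst U, rule sum.union_disjoint) auto
  have tnn: "0 \<le> P $ k $ l * (\<alpha> $ l - \<alpha> $ k)" if "k \<in> S" "l \<in> -S" for k l
  proof -
    have "k \<noteq> l" "\<alpha> $ l < \<alpha> $ k" using that by (auto simp: S_def)
    then show ?thesis using offdiag[of k l] by (intro mult_nonpos_nonpos) auto
  qed
  have ijne: "i \<noteq> j" using lt by auto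
  have "\<bar>P $ i $ j\<bar> * (\<alpha> $ i - \<alpha> $ j) = P $ i $ j * (\<alpha> $ j - \<alpha> $ i)"
    using offdiag[OF ijne] by (simp add: abs_of_nonpos algebra_simps)
  also have "\<dots> \<le> (\<Sum>l\<in>-S. P $ i $ l * (\<alpha> $ l - \<alpha> $ i))"
    by (rule member_le_sum) (use jS iS tnn in auto)
  also have "\<dots> \<le> (\<Sum>k\<in>S. \<Sum>l\<in>-S. P $ k $ l * (\<alpha> $ l - \<alpha> $ k))"
    by (rule member_le_sum[of i S "\<lambda>k. \<Sum>l\<in>-S. P $ k $ l * (\<alpha> $ l - \<alpha> $ k)"])
       (use iS tnn in \<open>auto intro: sum_nonneg\<close>)
  finally have outer: "\<bar>P $ i $ j\<bar> * (\<alpha> $ i - \<alpha> $ j) \<le> (\<Sum>k\<in>S. \<Sum>l\<in>-S. P $ k $ l * (\<alpha> $ l - \<alpha> $ k))"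
    .
  have pbnn: "0 \<le> pb k * \<alpha> $ k" if "k \<in> S" for k
    using that rowsum_lo[of k] r1pos nn by (auto simp: pb_def S_def)
  have "r1 * \<alpha> $ i \<le> pb i * \<alpha> $ i"
    using rowsum_lo[of i] nn by (simp add: pb_def mult_right_mono)
  also have "\<dots> \<le> (\<Sum>k\<in>S. pb k * \<alpha> $ k)"
    by (rule member_le_sum) (use iS pbnn in auto)
  finally have pbpart: "r1 * \<alpha> $ i \<le> (\<Sum>k\<in>S. pb k * \<alpha> $ k)" .
  have "(\<Sum>k\<in>S. \<beta> $ k) \<le> (\<Sum>k\<in>S. maxnorm \<beta>)"
    by (rule sum_mono) (use maxnorm_ge[of \<beta>] in \<open>auto simp: abs_le_iff\<close>)
  also have "\<dots> = real (card S) * maxnorm \<beta>" by simp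
  also have "\<dots> \<le> real (CARD('n) - 1) * maxnorm \<beta>"
  proof -
    have "S \<subseteq> UNIV - {j}" using jS by auto
    then have "card S \<le> card (UNIV - {j} :: 'n set)" by (intro card_mono) auto
    also have "\<dots> = CARD('n) - 1" by (simp add: card_Diff_singleton)
    finally have "real (card S) \<le> real (CARD('n) - 1)" by (simp only: of_nat_le_iff)
    then show ?thesis using maxnorm_nonneg[of \<beta>] by (rule mult_right_mono)
  qed
  finally have betapart: "(\<Sum>k\<in>S. \<beta> $ k) \<le> real (CARD('n) - 1) * maxnorm \<beta>" .
  have "(\<Sum>k\<in>S. \<beta> $ k) = (\<Sum>k\<in>S. pb k * \<alpha> $ k) + (\<Sum>k\<in>S. \<Sum>l\<in>S. P $ k $ l * (\<alpha> $ l - \<alpha> $ k))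
       + (\<Sum>k\<in>S. \<Sum>l\<in>-S. P $ k $ l * (\<alpha> $ l - \<alpha> $ k))"
    by (simp add: decomp splitk sum.distrib add.assoc)
  then show ?thesis using inner outer pbpart betapart by linarith
qed

lemma keyB:
  fixes P :: "real ^ 'n ^ 'n" and \<alpha> \<beta> :: "real ^ 'n" and r1 :: real
  assumes symm: "\<And>k l. P $ k $ l = P $ l $ k"
    and offdiag: "\<And>k l. k \<noteq> l \<Longrightarrow> P $ k $ l \<le> 0"
    and r1pos: "0 < r1"
    and rowsum_lo: "\<And>k. r1 \<le> (\<Sum>l\<in>UNIV. P $ k $ l)"
    and sol: "\<And>k. \<beta> $ k = (\<Sum>l\<in>UNIV. P $ k $ l * \<alpha> $ l)"
    and lt: "\<alpha> $ j < \<alpha> $ i"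
  shows "(\<bar>P $ i $ j\<bar> + r1) * (\<alpha> $ i - \<alpha> $ j) \<le> 2 * real (CARD('n) - 1) * maxnorm \<beta>"
proof -
  have solm: "\<And>k. (-\<beta>) $ k = (\<Sum>l\<in>UNIV. P $ k $ l * (-\<alpha>) $ l)"
    by (simp add: sol sum_negf[symmetric])
  have A: "0 \<le> \<alpha> $ i \<Longrightarrow> \<bar>P $ i $ j\<bar> * (\<alpha> $ i - \<alpha> $ j) + r1 * \<alpha> $ i \<le> real (CARD('n) - 1) * maxnorm \<beta>"
    by (rule keyA[OF symm offdiag r1pos rowsum_lo sol lt])
  have B0: "0 \<le> (-\<alpha>) $ j \<Longrightarrow> \<bar>P $ j $ i\<bar> * ((-\<alpha>) $ j - (-\<alpha>) $ i) + r1 * (-\<alpha>) $ j \<le> real (CARD('n) - 1) * maxnorm (-\<beta>)"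
    by (rule keyA[OF symm offdiag r1pos rowsum_lo solm]) (use lt in auto)
  have B: "\<alpha> $ j \<le> 0 \<Longrightarrow> \<bar>P $ i $ j\<bar> * (\<alpha> $ i - \<alpha> $ j) - r1 * \<alpha> $ j \<le> real (CARD('n) - 1) * maxnorm \<beta>"
    using B0 by (simp add: maxnorm_uminus symm[of j i])
  have mn: "0 \<le> real (CARD('n) - 1) * maxnorm \<beta>" using maxnorm_nonneg[of \<beta>] by simp
  have pa: "0 \<le> \<bar>P $ i $ j\<bar> * (\<alpha> $ i - \<alpha> $ j)" using lt by simp
  have ex: "(\<bar>P $ i $ j\<bar> + r1) * (\<alpha> $ i - \<alpha> $ j) = \<bar>P $ i $ j\<bar> * (\<alpha> $ i - \<alpha> $ j) + r1 * \<alpha> $ i - r1 * \<alpha> $ j"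
    by (simp add: algebra_simps)
  show ?thesis
  proof (cases "0 \<le> \<alpha> $ j")
    case True
    have "0 \<le> r1 * \<alpha> $ j" using True r1pos by simp
    then show ?thesis using A True lt mn ex by linarith
  next
    case False
    show ?thesis
    proof (cases "\<alpha> $ i \<le> 0")
      case True
      have "r1 * \<alpha> $ i \<le> 0" using True r1pos by (simp add: mult_nonneg_nonpos)
      then show ?thesis using B False lt mn ex by linarith
    next
      case False2: False
      then show ?thesis using A B False lt mn pa ex by linarith
    qed
  qed
qed

theorem proposition2p1:
  fixes P :: "real ^ 'n ^ 'n" and \<alpha> \<beta> :: "real ^ 'n" and r1 r2 :: real
  assumes sym: "transpose P = P"
    and offdiag: "\<And>i j. i \<noteq> j \<Longrightarrow> P $ i $ j \<le> 0"
    and r1pos: "0 < r1"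
    and rowsum_lo: "\<And>i. r1 \<le> (\<Sum>j\<in>UNIV. P $ i $ j)"
    and rowsum_hi: "\<And>i. (\<Sum>j\<in>UNIV. P $ i $ j) \<le> r2"
    and sol: "P *v \<alpha> = \<beta>"
    and ij: "i \<noteq> j"
  shows "\<bar>\<alpha> $ i - \<alpha> $ j\<bar>
           \<le> real (CARD('n) * (CARD('n) - 1)) * (r2 / r1) * (maxnorm \<beta> / (\<bar>P $ i $ j\<bar> + r1))"
proof -
  have symm: "\<And>k l. P $ k $ l = P $ l $ k"
  proof -
    fix k l
    have "transpose P $ l $ k = P $ k $ l" by (simp add: transpose_def)
    then show "P $ k $ l = P $ l $ k" using sym by simp
  qed
  have sol': "\<And>k. \<beta> $ k = (\<Sum>l\<in>UNIV. P $ k $ l * \<alpha> $ l)"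
    using sol by (auto simp: matrix_vector_mult_def)
  have r12: "r1 \<le> r2" using rowsum_lo[of i] rowsum_hi[of i] by linarith
  have card2: "2 \<le> CARD('n)"
  proof -
    have "card {i, j} \<le> CARD('n)" by (rule card_mono) auto
    then show ?thesis using ij by simp
  qed
  have main: "(\<bar>P $ i $ j\<bar> + r1) * \<bar>\<alpha> $ i - \<alpha> $ j\<bar> \<le> 2 * real (CARD('n) - 1) * maxnorm \<beta>"
  proof (cases "\<alpha> $ j < \<alpha> $ i")
    case True
    then show ?thesis using keyB[OF symm offdiag r1pos rowsum_lo sol' True] by simp
  next
    case False
    show ?thesis
    proof (cases "\<alpha> $ i < \<alpha> $ j")
      case True
      have e1: "\<bar>\<alpha> $ i - \<alpha> $ j\<bar> = \<alpha> $ j - \<alpha> $ i" using True by simp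
      have e2: "P $ j $ i = P $ i $ j" by (rule symm)
      show ?thesis using keyB[OF symm offdiag r1pos rowsum_lo sol' True] unfolding e1 e2 .
    next
      case False2: False
      then show ?thesis using False maxnorm_nonneg[of \<beta>] by simp
    qed
  qed
  have pos: "0 < \<bar>P $ i $ j\<bar> + r1" using r1pos by simp
  have "\<bar>\<alpha> $ i - \<alpha> $ j\<bar> \<le> 2 * real (CARD('n) - 1) * maxnorm \<beta> / (\<bar>P $ i $ j\<bar> + r1)"
    using main pos by (simp add: pos_le_divide_eq mult.commute)
  also have "\<dots> \<le> real (CARD('n) * (CARD('n) - 1)) * (r2 / r1) * (maxnorm \<beta> / (\<bar>P $ i $ j\<bar> + r1))"
  proof -
    have q: "0 \<le> real (CARD('n) - 1) * (maxnorm \<beta> / (\<bar>P $ i $ j\<bar> + r1))"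
      using maxnorm_nonneg[of \<beta>] pos by simp
    have "(2::real) \<le> real CARD('n) * (r2 / r1)"
    proof -
      have "1 \<le> r2 / r1" using r12 r1pos by simp
      moreover have "(2::real) \<le> real CARD('n)" using card2 by simp
      ultimately have "2 * 1 \<le> real CARD('n) * (r2 / r1)" by (intro mult_mono) auto
      then show ?thesis by simp
    qed
    then have "2 * (real (CARD('n) - 1) * (maxnorm \<beta> / (\<bar>P $ i $ j\<bar> + r1)))
        \<le> real CARD('n) * (r2 / r1) * (real (CARD('n) - 1) * (maxnorm \<beta> / (\<bar>P $ i $ j\<bar> + r1)))"
      using q by (rule mult_right_mono)
    moreover have "2 * real (CARD('n) - 1) * maxnorm \<beta> / (\<bar>P $ i $ j\<bar> + r1)
        = 2 * (real (CARD('n) - 1) * (maxnorm \<beta> / (\<bar>P $ i $ j\<bar> + r1)))" by simp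
    moreover have "real (CARD('n) * (CARD('n) - 1)) * (r2 / r1) * (maxnorm \<beta> / (\<bar>P $ i $ j\<bar> + r1))
        = real CARD('n) * (r2 / r1) * (real (CARD('n) - 1) * (maxnorm \<beta> / (\<bar>P $ i $ j\<bar> + r1)))"
      by (simp only: of_nat_mult ac_simps)
    ultimately show ?thesis by (simp only:)
  qed
  finally show ?thesis .
qed

end
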